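(* A smooth surface $\Sigma\subset\mathbb R^3$ (without boundary) is saddle if and only if it has no caps, where a cap of $\Sigma$ is a topological disc $\Delta\subset\Sigma$ whose boundary $\partial\Delta$ lies in some plane $\Pi$ while $\Delta\setminus\partial\Delta$ lies strictly on one side of $\Pi$.
   Context: A smooth surface is a connected subset of $\mathbb R^3$ that is locally the graph of a smooth function in suitable coordinates. It is saddle if its Gaussian curvature (product of the principal curvatures) is $\le0$ at every point. *)

theory Defs
  imports "HOL-Analysis.Analysis"
begin

definition dir2 :: "bool \<Rightarrow> real \<times> real" where
  "dir2 b = (if b then (1, 0) else (0, 1))"

definition pd :: "bool \<Rightarrow> (real \<times> real \<Rightarrow> real) \<Rightarrow> real \<times> real \<Rightarrow> real" where
  "pd b f u = deriv (\<lambda>t. f (u + t *\<^sub>R dir2 b)) 0"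

fun ipd :: "bool list \<Rightarrow> (real \<times> real \<Rightarrow> real) \<Rightarrow> real \<times> real \<Rightarrow> real" where
  "ipd [] f = f"
| "ipd (b # bs) f = pd b (ipd bs f)"

definition smooth2_on :: "(real \<times> real) set \<Rightarrow> (real \<times> real \<Rightarrow> real) \<Rightarrow> bool" where
  "smooth2_on U f \<longleftrightarrow>
     (\<forall>bs. continuous_on U (ipd bs f) \<and>
        (\<forall>b. \<forall>u\<in>U. (\<lambda>t. ipd bs f (u + t *\<^sub>R dir2 b)) field_differentiable (at 0)))"

definition mk3 :: "real \<Rightarrow> real \<Rightarrow> real \<Rightarrow> real^3" where
  "mk3 x y z = (\<chi> i. if i = 1 then x else if i = 2 then y else z)"

definition graph_emb :: "(real^3 \<Rightarrow> real^3) \<Rightarrow> (real \<times> real \<Rightarrow> real) \<Rightarrow> real \<times> real \<Rightarrow> real^3" where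
  "graph_emb g f u = g (mk3 (fst u) (snd u) (f u))"

text \<open>S coincides, near the open set V, with the graph of a smooth f over the open set U,
  in coordinates given by the orthogonal transformation g (translations are absorbed into f, U).\<close>
definition local_graph ::
  "(real^3) set \<Rightarrow> (real^3 \<Rightarrow> real^3) \<Rightarrow> (real \<times> real) set \<Rightarrow> (real \<times> real \<Rightarrow> real) \<Rightarrow> (real^3) set \<Rightarrow> bool" where
  "local_graph S g U f V \<longleftrightarrow>
     orthogonal_transformation g \<and> open U \<and> smooth2_on U f \<and> open V \<and>
     S \<inter> V = graph_emb g f ` U"

definition smooth_surface :: "(real^3) set \<Rightarrow> bool" where
  "smooth_surface S \<longleftrightarrow> connected S \<and>
     (\<forall>p\<in>S. \<exists>g U f V. local_graph S g U f V \<and> p \<in> V)"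

definition gauss_curv :: "(real \<times> real \<Rightarrow> real) \<Rightarrow> real \<times> real \<Rightarrow> real" where
  "gauss_curv f u =
     (pd True (pd True f) u * pd False (pd False f) u - (pd False (pd True f) u)\<^sup>2) /
     (1 + (pd True f u)\<^sup>2 + (pd False f u)\<^sup>2)\<^sup>2"

definition saddle :: "(real^3) set \<Rightarrow> bool" where
  "saddle S \<longleftrightarrow>
     (\<forall>g U f V u. local_graph S g U f V \<and> u \<in> U \<and> graph_emb g f u \<in> V \<longrightarrow> gauss_curv f u \<le> 0)"

definition is_cap :: "(real^3) set \<Rightarrow> (real^3) set \<Rightarrow> bool" where
  "is_cap S D \<longleftrightarrow> D \<subseteq> S \<and>
     (\<exists>h k a c. homeomorphism (cball (0::real \<times> real) 1) D h k \<and> a \<noteq> 0 \<and>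
        h ` sphere 0 1 \<subseteq> {x. a \<bullet> x = c} \<and>
        D - h ` sphere 0 1 \<subseteq> {x. a \<bullet> x > c})"

end

theory Submission
  imports Defs
begin

lemma dir2_simps[simp]: "dir2 True = (1,0)" "dir2 False = (0,1)"
  by (simp_all add: dir2_def)

definition C1 :: "(real \<times> real) set \<Rightarrow> (real \<times> real \<Rightarrow> real) \<Rightarrow> bool" where
  "C1 U F \<longleftrightarrow> continuous_on U F \<and> (\<forall>b. continuous_on U (pd b F)) \<and>
     (\<forall>b. \<forall>u\<in>U. (\<lambda>t. F (u + t *\<^sub>R dir2 b)) field_differentiable (at 0))"

lemma ipd_append: "ipd (bs @ cs) f = ipd bs (ipd cs f)"
  by (induction bs) auto

lemma smooth_pd: "smooth2_on U f \<Longrightarrow> smooth2_on U (pd b f)"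
proof -
  assume H: "smooth2_on U f"
  have e: "\<And>bs. ipd bs (pd b f) = ipd (bs @ [b]) f" by (simp add: ipd_append)
  show ?thesis using H unfolding smooth2_on_def e by blast
qed

lemma smooth_C1: "smooth2_on U f \<Longrightarrow> C1 U f"
  unfolding smooth2_on_def C1_def
  by (metis ipd.simps)

lemma coord_deriv0:
  assumes "C1 U F" "u \<in> U"
  shows "((\<lambda>t. F (u + t *\<^sub>R dir2 b)) has_real_derivative pd b F u) (at 0)"
  using assms unfolding C1_def pd_def
  by (simp add: DERIV_deriv_iff_field_differentiable)

lemma dx:
  assumes "C1 U F" "(s, y) \<in> U"
  shows "((\<lambda>s. F (s, y)) has_real_derivative pd True F (s, y)) (at s)"
proof -
  have "((\<lambda>t. F (s + t, y)) has_real_derivative pd True F (s, y)) (at 0)"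
    using coord_deriv0[OF assms, of True] by simp
  then have "((\<lambda>t. F (t + s, y)) has_real_derivative pd True F (s, y)) (at 0)"
    by (simp add: add.commute)
  then show ?thesis using DERIV_shift[where f="\<lambda>s. F (s, y)" and x=0 and z=s] by simp
qed

lemma dy:
  assumes "C1 U F" "(x, s) \<in> U"
  shows "((\<lambda>s. F (x, s)) has_real_derivative pd False F (x, s)) (at s)"
proof -
  have "((\<lambda>t. F (x, s + t)) has_real_derivative pd False F (x, s)) (at 0)"
    using coord_deriv0[OF assms, of False] by simp
  then have "((\<lambda>t. F (x, t + s)) has_real_derivative pd False F (x, s)) (at 0)"
    by (simp add: add.commute)
  then show ?thesis using DERIV_shift[where f="\<lambda>s. F (x, s)" and x=0 and z=s] by simp
qed

lemma frechet:
  assumes U: "open U" and C: "C1 U F" and u: "u \<in> U"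
  shows "(F has_derivative (\<lambda>h. fst h * pd True F u + snd h * pd False F u)) (at u)"
proof -
  obtain e where e: "e > 0" "ball u e \<subseteq> U" using U u open_contains_ball by blast
  obtain x y where uxy: "u = (x, y)" by fastforce
  define X where "X = ball x (e/2)"
  define Y where "Y = ball y (e/2)"
  have XY: "X \<times> Y \<subseteq> U"
  proof
    fix p assume "p \<in> X \<times> Y"
    then obtain a b where p: "p = (a, b)" "dist x a < e/2" "dist y b < e/2"
      by (auto simp: X_def Y_def)
    have "dist u p \<le> dist x a + dist y b"
      using p uxy by (simp add: dist_Pair_Pair sqrt_sum_squares_le_sum)
    then have "p \<in> ball u e" using p by simp
    then show "p \<in> U" using e by blast
  qed
  have oXY: "open (X \<times> Y)" by (simp add: X_def Y_def open_Times)
  have inXY: "(x, y) \<in> X \<times> Y" using e by (simp add: X_def Y_def)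
  have fx: "((\<lambda>x. F (x, y)) has_derivative (*) (pd True F (x, y))) (at x within X)"
    using dx[OF C, of x y] u uxy by (simp add: has_field_derivative_def has_derivative_at_withinI)
  have fy: "((\<lambda>y. F (a, y)) has_derivative blinfun_apply (blinfun_mult_right (pd False F (a, b)))) (at b within Y)"
    if "a \<in> X" "b \<in> Y" for a b
    using dy[OF C, of a b] XY that by (auto simp: has_field_derivative_def intro: has_derivative_at_withinI)
  have cpd: "continuous (at (x, y)) (pd False F)"
    using C u uxy U unfolding C1_def by (metis continuous_on_eq_continuous_at)
  have fc: "continuous (at (x, y) within X \<times> Y) (\<lambda>(a, b). blinfun_mult_right (pd False F (a, b)))"
  proof -
    have "continuous (at (x, y)) (\<lambda>p. blinfun_mult_right (pd False F p))"
      by (rule bounded_linear.continuous[OF bounded_linear_blinfun_mult_right cpd])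
    then show ?thesis by (simp add: case_prod_beta' continuous_at_imp_continuous_within)
  qed
  have "((\<lambda>(a, b). F (a, b)) has_derivative (\<lambda>(tx, ty). pd True F (x, y) * tx + blinfun_apply (blinfun_mult_right (pd False F (x, y))) ty)) (at (x, y) within X \<times> Y)"
    by (rule has_derivative_partialsI[where f="\<lambda>a b. F (a, b)", OF fx fy fc]) (use e in \<open>auto simp: Y_def\<close>)
  then have "(F has_derivative (\<lambda>(tx, ty). pd True F (x, y) * tx + pd False F (x, y) * ty)) (at (x, y))"
    using at_within_open[OF inXY oXY] by simp
  then show ?thesis using uxy
    by (simp add: case_prod_beta' mult.commute)
qed

lemma line_deriv:
  assumes U: "open U" and C: "C1 U F" and p: "x + t *\<^sub>R v \<in> U"
  shows "((\<lambda>s. F (x + s *\<^sub>R v)) has_real_derivative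
            (fst v * pd True F (x + t *\<^sub>R v) + snd v * pd False F (x + t *\<^sub>R v))) (at t)"
proof -
  have d1: "((\<lambda>s. x + s *\<^sub>R v) has_derivative (\<lambda>h. h *\<^sub>R v)) (at t)"
    by (auto intro!: derivative_eq_intros)
  have "((\<lambda>s. F (x + s *\<^sub>R v)) has_derivative
     (\<lambda>h. fst (h *\<^sub>R v) * pd True F (x + t *\<^sub>R v) + snd (h *\<^sub>R v) * pd False F (x + t *\<^sub>R v))) (at t)"
    using has_derivative_compose[OF d1 frechet[OF U C p]] by simp
  then show ?thesis unfolding has_field_derivative_def
    by (rule has_derivative_eq_rhs) (auto simp: algebra_simps)
qed

lemma schwarz:
  assumes U: "open U" and sm: "smooth2_on U f" and u: "u \<in> U"
  shows "pd False (pd True f) u = pd True (pd False f) u"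
proof -
  have Cf: "C1 U f" using sm smooth_C1 by blast
  have CT: "C1 U (pd True f)" using sm smooth_C1 smooth_pd by blast
  have CF: "C1 U (pd False f)" using sm smooth_C1 smooth_pd by blast
  define B where "B = pd False (pd True f)"
  define C where "C = pd True (pd False f)"
  have cB: "continuous_on U B" using CT unfolding C1_def B_def by blast
  have cC: "continuous_on U C" using CF unfolding C1_def C_def by blast
  obtain x y where uxy: "u = (x, y)" by fastforce
  have main: "\<bar>B u - C u\<bar> < \<epsilon>" if "\<epsilon> > 0" for \<epsilon>
  proof -
    obtain d1 where d1: "d1 > 0" "\<And>p. p \<in> U \<Longrightarrow> dist p u < d1 \<Longrightarrow> dist (B p) (B u) < \<epsilon>/2"
      using cB u \<open>\<epsilon> > 0\<close> unfolding continuous_on_iff by (metis half_gt_zero)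
    obtain d2 where d2: "d2 > 0" "\<And>p. p \<in> U \<Longrightarrow> dist p u < d2 \<Longrightarrow> dist (C p) (C u) < \<epsilon>/2"
      using cC u \<open>\<epsilon> > 0\<close> unfolding continuous_on_iff by (metis half_gt_zero)
    obtain r where r: "r > 0" "ball u r \<subseteq> U" using U u open_contains_ball by blast
    define h where "h = min (min d1 d2) r / 4"
    have h0: "h > 0" using d1 d2 r by (simp add: h_def)
    have box: "(a, b) \<in> U \<and> dist (a, b) u < d1 \<and> dist (a, b) u < d2"
      if "x \<le> a" "a \<le> x + h" "y \<le> b" "b \<le> y + h" for a b
    proof -
      have "dist (a, b) u \<le> dist a x + dist b y"
        using uxy by (simp add: dist_Pair_Pair sqrt_sum_squares_le_sum)
      also have "\<dots> \<le> 2 * h" using that by (simp add: dist_real_def)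
      finally have "dist (a, b) u \<le> 2 * h" .
      moreover have "2 * h < d1 \<and> 2 * h < d2 \<and> 2 * h < r" using d1(1) d2(1) r(1) by (simp add: h_def min_def)
      ultimately have "dist (a, b) u < d1" "dist (a, b) u < d2" "dist (a, b) u < r" by linarith+
      then show ?thesis using r by (auto simp: dist_commute)
    qed
    define \<Delta> where "\<Delta> = f (x + h, y + h) - f (x + h, y) - f (x, y + h) + f (x, y)"
    have hx: "x < x + h" "y < y + h" using h0 by auto
    have D1: "((\<lambda>s. f (s, y + h) - f (s, y)) has_real_derivative (pd True f (s, y + h) - pd True f (s, y))) (at s)"
      if "x \<le> s" "s \<le> x + h" for s
      using box[of s "y + h"] box[of s y] that h0 by (intro DERIV_diff dx[OF Cf]) auto
    from MVT2[OF hx(1) D1] obtain \<xi> where \<xi>: "x < \<xi>" "\<xi> < x + h"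
      "(f (x + h, y + h) - f (x + h, y)) - (f (x, y + h) - f (x, y)) =
        ((x + h) - x) * (pd True f (\<xi>, y + h) - pd True f (\<xi>, y))" by blast
    have D2: "((\<lambda>t. pd True f (\<xi>, t)) has_real_derivative B (\<xi>, t)) (at t)"
      if "y \<le> t" "t \<le> y + h" for t
      using box[of \<xi> t] that \<xi> unfolding B_def by (intro dy[OF CT]) auto
    from MVT2[OF hx(2) D2] obtain \<eta> where \<eta>: "y < \<eta>" "\<eta> < y + h"
      "pd True f (\<xi>, y + h) - pd True f (\<xi>, y) = ((y + h) - y) * B (\<xi>, \<eta>)" by blast
    have D3: "((\<lambda>t. f (x + h, t) - f (x, t)) has_real_derivative (pd False f (x + h, t) - pd False f (x, t))) (at t)"
      if "y \<le> t" "t \<le> y + h" for t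
      using box[of "x + h" t] box[of x t] that h0 by (intro DERIV_diff dy[OF Cf]) auto
    from MVT2[OF hx(2) D3] obtain \<eta>' where \<eta>': "y < \<eta>'" "\<eta>' < y + h"
      "(f (x + h, y + h) - f (x, y + h)) - (f (x + h, y) - f (x, y)) =
        ((y + h) - y) * (pd False f (x + h, \<eta>') - pd False f (x, \<eta>'))" by blast
    have D4: "((\<lambda>s. pd False f (s, \<eta>')) has_real_derivative C (s, \<eta>')) (at s)"
      if "x \<le> s" "s \<le> x + h" for s
      using box[of s \<eta>'] that \<eta>' unfolding C_def by (intro dx[OF CF]) auto
    from MVT2[OF hx(1) D4] obtain \<xi>' where \<xi>': "x < \<xi>'" "\<xi>' < x + h"
      "pd False f (x + h, \<eta>') - pd False f (x, \<eta>') = ((x + h) - x) * C (\<xi>', \<eta>')" by blast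
    have "h * h * B (\<xi>, \<eta>) = h * h * C (\<xi>', \<eta>')"
      using \<xi>(3) \<eta>(3) \<eta>'(3) \<xi>'(3) by (simp add: algebra_simps)
    then have BC: "B (\<xi>, \<eta>) = C (\<xi>', \<eta>')" using h0 by simp
    have "dist (B (\<xi>, \<eta>)) (B u) < \<epsilon>/2" using box[of \<xi> \<eta>] \<xi> \<eta> d1 by auto
    moreover have "dist (C (\<xi>', \<eta>')) (C u) < \<epsilon>/2" using box[of \<xi>' \<eta>'] \<xi>' \<eta>' d2 by auto
    ultimately show ?thesis using BC unfolding dist_real_def by linarith
  qed
  have "B u = C u"
  proof (rule ccontr)
    assume "B u \<noteq> C u"
    then have "\<bar>B u - C u\<bar> > 0" by simp
    from main[OF this] show False by simp
  qed
  then show ?thesis by (simp add: B_def C_def)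
qed
definition Lf :: "(real \<times> real \<Rightarrow> real) \<Rightarrow> real \<times> real \<Rightarrow> real \<times> real \<Rightarrow> real" where
  "Lf f p v = fst v * pd True f p + snd v * pd False f p"

definition Qf :: "(real \<times> real \<Rightarrow> real) \<Rightarrow> real \<times> real \<Rightarrow> real \<times> real \<Rightarrow> real" where
  "Qf f p v = fst v * Lf (pd True f) p v + snd v * Lf (pd False f) p v"

lemma line_deriv1:
  assumes "open U" "smooth2_on U f" "x + t *\<^sub>R v \<in> U"
  shows "((\<lambda>s. f (x + s *\<^sub>R v)) has_real_derivative Lf f (x + t *\<^sub>R v) v) (at t)"
  unfolding Lf_def using line_deriv[OF assms(1) smooth_C1[OF assms(2)] assms(3)] .

lemma line_deriv2:
  assumes "open U" "smooth2_on U f" "x + t *\<^sub>R v \<in> U"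
  shows "((\<lambda>s. Lf f (x + s *\<^sub>R v) v) has_real_derivative Qf f (x + t *\<^sub>R v) v) (at t)"
proof -
  have a: "((\<lambda>s. pd b f (x + s *\<^sub>R v)) has_real_derivative Lf (pd b f) (x + t *\<^sub>R v) v) (at t)" for b
    using line_deriv1[OF assms(1) smooth_pd[OF assms(2)] assms(3)] .
  show ?thesis unfolding Lf_def[of f] Qf_def
    by (intro DERIV_add DERIV_cmult a)
qed

lemma Qf_sym:
  assumes "open U" "smooth2_on U f" "p \<in> U"
  shows "Qf f p v = pd True (pd True f) p * (fst v)\<^sup>2 + 2 * pd False (pd True f) p * fst v * snd v
     + pd False (pd False f) p * (snd v)\<^sup>2"
  using schwarz[OF assms] unfolding Qf_def Lf_def by (simp add: power2_eq_square algebra_simps)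

lemma second_order_max:
  fixes G G' :: "real \<Rightarrow> real"
  assumes e: "e > 0"
    and dG: "\<And>t. \<bar>t\<bar> < e \<Longrightarrow> (G has_real_derivative G' t) (at t)"
    and dG': "(G' has_real_derivative c) (at 0)"
    and mx: "\<And>t. \<bar>t\<bar> < e \<Longrightarrow> G t \<le> G 0"
  shows "c \<le> 0"
proof (rule ccontr)
  assume "\<not> c \<le> 0"
  then have c: "c > 0" by simp
  have G'0: "G' 0 = 0"
    using DERIV_local_max[OF dG[of 0] e] mx e by (simp add: abs_minus_commute)
  obtain d where d: "d > 0" "\<And>h. h > 0 \<Longrightarrow> h < d \<Longrightarrow> G' 0 < G' (0 + h)"
    using DERIV_pos_inc_right[OF dG' c] by blast
  define h where "h = min d e / 2"
  have h: "h > 0" "h < d" "h < e" using d e by (auto simp: h_def)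
  have "\<exists>z. 0 < z \<and> z < h \<and> G h - G 0 = (h - 0) * G' z"
    by (rule MVT2) (use h in \<open>auto intro!: dG\<close>)
  then obtain z where z: "0 < z" "z < h" "G h - G 0 = h * G' z" by auto
  have "G' z > 0" using d(2)[of z] z h G'0 by simp
  then have "h * G' z > 0" using h(1) by simp
  then have "G h > G 0" using z(3) by linarith
  moreover have "G h \<le> G 0" using mx h by simp
  ultimately show False by simp
qed

lemma no_interior_max:
  assumes U: "open U" and sm: "smooth2_on U f" and u0: "u0 \<in> U"
    and eps: "\<epsilon> > 0" and r: "r > 0" "ball u0 r \<subseteq> U"
    and mx: "\<And>u. u \<in> ball u0 r \<Longrightarrow>
       b1 * fst u + b2 * snd u + b3 * f u + \<epsilon> * ((fst u)\<^sup>2 + (snd u)\<^sup>2 + (f u)\<^sup>2)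
       \<le> b1 * fst u0 + b2 * snd u0 + b3 * f u0 + \<epsilon> * ((fst u0)\<^sup>2 + (snd u0)\<^sup>2 + (f u0)\<^sup>2)"
  shows "pd True (pd True f) u0 * pd False (pd False f) u0 - (pd False (pd True f) u0)\<^sup>2 > 0"
proof -
  define lam where "lam = b3 + 2 * \<epsilon> * f u0"
  have key: "lam * Qf f u0 v < 0" if v: "v \<noteq> 0" for v
  proof -
    define e where "e = r / (norm v + 1)"
    have e0: "e > 0" unfolding e_def using r(1) norm_ge_zero[of v] by (smt (verit) divide_pos_pos)
    have inb: "u0 + t *\<^sub>R v \<in> ball u0 r" if "\<bar>t\<bar> < e" for t
    proof -
      have "norm (t *\<^sub>R v) = \<bar>t\<bar> * norm v" by simp
      also have "\<dots> \<le> e * norm v" using that by (simp add: mult_right_mono)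
      also have "\<dots> < r"
      proof -
        have p1: "norm v + 1 > 0" using norm_ge_zero[of v] by linarith
        have "norm v / (norm v + 1) < 1" using p1 by (simp add: divide_less_eq)
        then have "r * (norm v / (norm v + 1)) < r * 1" using r(1) by (intro mult_strict_left_mono) auto
        then show ?thesis unfolding e_def by simp
      qed
      finally show ?thesis by (simp add: dist_norm)
    qed
    have inU: "u0 + t *\<^sub>R v \<in> U" if "\<bar>t\<bar> < e" for t using inb[OF that] r by blast
    define F where "F = (\<lambda>t. f (u0 + t *\<^sub>R v))"
    define L where "L = (\<lambda>t. Lf f (u0 + t *\<^sub>R v) v)"
    define G where "G = (\<lambda>t. b1 * (fst u0 + t * fst v) + b2 * (snd u0 + t * snd v) + b3 * F t
        + \<epsilon> * ((fst u0 + t * fst v)\<^sup>2 + (snd u0 + t * snd v)\<^sup>2 + (F t)\<^sup>2))"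
    define G' where "G' = (\<lambda>t. b1 * fst v + b2 * snd v + b3 * L t
        + \<epsilon> * (2 * (fst u0 + t * fst v) * fst v + 2 * (snd u0 + t * snd v) * snd v + 2 * F t * L t))"
    have dF: "(F has_real_derivative L t) (at t)" if "\<bar>t\<bar> < e" for t
      unfolding F_def L_def by (rule line_deriv1[OF U sm inU[OF that]])
    have dL: "(L has_real_derivative Qf f (u0 + t *\<^sub>R v) v) (at t)" if "\<bar>t\<bar> < e" for t
      unfolding L_def by (rule line_deriv2[OF U sm inU[OF that]])
    have dG: "(G has_real_derivative G' t) (at t)" if "\<bar>t\<bar> < e" for t
      unfolding G_def G'_def
      by (rule derivative_eq_intros dF[OF that] | simp)+ (simp add: algebra_simps)
    have dG': "(G' has_real_derivative (b3 * Qf f u0 v + \<epsilon> * (2 * (fst v)\<^sup>2 + 2 * (snd v)\<^sup>2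
         + 2 * (L 0)\<^sup>2 + 2 * F 0 * Qf f u0 v))) (at 0)"
      unfolding G'_def
      using dF[of 0] dL[of 0] e0
      by (auto intro!: derivative_eq_intros simp: algebra_simps power2_eq_square)
    have mxG: "G t \<le> G 0" if "\<bar>t\<bar> < e" for t
      using mx[OF inb[OF that]] unfolding G_def F_def by (simp add: algebra_simps)
    have le: "b3 * Qf f u0 v + \<epsilon> * (2 * (fst v)\<^sup>2 + 2 * (snd v)\<^sup>2
         + 2 * (L 0)\<^sup>2 + 2 * F 0 * Qf f u0 v) \<le> 0"
      by (rule second_order_max[OF e0 dG dG' mxG])
    have pos: "(fst v)\<^sup>2 + (snd v)\<^sup>2 > 0"
      using v by (cases v) (auto simp: sum_power2_gt_zero_iff zero_prod_def)
    have "lam * Qf f u0 v = b3 * Qf f u0 v + \<epsilon> * 2 * F 0 * Qf f u0 v"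
      by (simp add: lam_def F_def algebra_simps)
    also have "\<dots> \<le> - \<epsilon> * (2 * (fst v)\<^sup>2 + 2 * (snd v)\<^sup>2 + 2 * (L 0)\<^sup>2)"
      using le by (simp add: algebra_simps)
    also have "\<dots> < 0" using eps pos by (simp add: mult_pos_pos add_pos_nonneg)
    finally show ?thesis .
  qed
  define A where "A = pd True (pd True f) u0"
  define B where "B = pd False (pd True f) u0"
  define D where "D = pd False (pd False f) u0"
  have Q: "Qf f u0 v = A * (fst v)\<^sup>2 + 2 * B * fst v * snd v + D * (snd v)\<^sup>2" for v
    unfolding A_def B_def D_def by (rule Qf_sym[OF U sm u0])
  have 1: "lam * A < 0" using key[of "(1, 0)"] Q[of "(1,0)"] by (simp add: zero_prod_def)
  then have "A \<noteq> 0" by auto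
  then have "(- B, A) \<noteq> 0" by (simp add: zero_prod_def)
  then have 2: "lam * (A * (A * D - B\<^sup>2)) < 0" using key[of "(- B, A)"] Q[of "(- B, A)"]
    by (simp add: power2_eq_square algebra_simps)
  have "(lam * A) * (A * D - B\<^sup>2) < 0" using 2 by (simp add: algebra_simps)
  then have "A * D - B\<^sup>2 > 0" using 1 by (simp add: mult_less_0_iff)
  then show ?thesis by (simp add: A_def B_def D_def)
qed
lemma concave_min:
  fixes H H' H'' :: "real \<Rightarrow> real"
  assumes d1: "\<And>t. 0 \<le> t \<Longrightarrow> t \<le> 1 \<Longrightarrow> (H has_real_derivative H' t) (at t)"
    and d2: "\<And>t. 0 \<le> t \<Longrightarrow> t \<le> 1 \<Longrightarrow> (H' has_real_derivative H'' t) (at t)"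
    and neg: "\<And>t. 0 \<le> t \<Longrightarrow> t \<le> 1 \<Longrightarrow> H'' t \<le> 0"
    and t: "0 \<le> t" "t \<le> 1"
  shows "min (H 0) (H 1) \<le> H t"
proof (rule ccontr)
  assume "\<not> min (H 0) (H 1) \<le> H t"
  then have lt: "H t < H 0" "H t < H 1" by auto
  then have t01: "0 < t" "t < 1" using t by (auto simp: less_le)
  obtain x1 where x1: "0 < x1" "x1 < t" "H t - H 0 = (t - 0) * H' x1"
    using MVT2[OF t01(1), of H H'] d1 t01 by auto
  obtain x2 where x2: "t < x2" "x2 < 1" "H 1 - H t = (1 - t) * H' x2"
    using MVT2[OF t01(2), of H H'] d1 t01 by auto
  have "H' x1 < 0"
  proof (rule ccontr)
    assume "\<not> H' x1 < 0"
    then have "t * H' x1 \<ge> 0" using t01 by simp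
    then show False using x1 lt by simp
  qed
  moreover have "H' x2 > 0"
  proof (rule ccontr)
    assume "\<not> H' x2 > 0"
    then have "(1 - t) * H' x2 \<le> 0" using t01 by (simp add: mult_nonneg_nonpos)
    then show False using x2 lt by simp
  qed
  moreover have "H' x2 \<le> H' x1"
    by (rule DERIV_nonpos_imp_nonincreasing[of x1 x2 H']) (use x1 x2 t01 in \<open>auto intro!: exI d2 neg\<close>)
  ultimately show False by simp
qed

lemma strict_dec:
  fixes H H' H'' :: "real \<Rightarrow> real"
  assumes d1: "\<And>t. 0 \<le> t \<Longrightarrow> t \<le> T \<Longrightarrow> (H has_real_derivative H' t) (at t)"
    and d2: "\<And>t. 0 \<le> t \<Longrightarrow> t \<le> T \<Longrightarrow> (H' has_real_derivative H'' t) (at t)"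
    and neg: "\<And>t. 0 \<le> t \<Longrightarrow> t \<le> T \<Longrightarrow> H'' t < 0"
    and H'0: "H' 0 = 0"
    and t: "0 \<le> t1" "t1 < t2" "t2 \<le> T"
  shows "H t2 < H t1"
proof -
  have H'neg: "H' x < 0" if "0 < x" "x \<le> T" for x
  proof -
    have "H' x < H' 0"
      by (rule DERIV_neg_imp_decreasing[OF that(1)]) (use that in \<open>auto intro!: exI d2 neg\<close>)
    then show ?thesis using H'0 by simp
  qed
  define m where "m = (t1 + t2) / 2"
  have m: "t1 < m" "m < t2" "0 < m" using t by (auto simp: m_def)
  have "H t2 < H m"
    by (rule DERIV_neg_imp_decreasing[OF m(2)])
       (use m t in \<open>auto intro!: exI d1 H'neg\<close>)
  moreover have "H m \<le> H t1"
  proof (rule DERIV_nonpos_imp_nonincreasing[of t1 m H])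
    show "t1 \<le> m" using m by simp
    fix x assume x: "t1 \<le> x" "x \<le> m"
    show "\<exists>y. (H has_real_derivative y) (at x) \<and> y \<le> 0"
    proof (cases "x = 0")
      case True then show ?thesis using d1[of 0] H'0 t m by auto
    next
      case False
      then have "0 < x" using x t by auto
      then show ?thesis using d1[of x] H'neg[of x] x m t by (auto intro!: exI[of _ "H' x"])
    qed
  qed
  ultimately show ?thesis by simp
qed

lemma quad_neg:
  fixes a m d v1 v2 :: real
  assumes a: "a < 0" and det: "a * d - m\<^sup>2 > 0" and v: "v1 \<noteq> 0 \<or> v2 \<noteq> 0"
  shows "a * v1\<^sup>2 + 2 * m * v1 * v2 + d * v2\<^sup>2 < 0"
proof -
  have id: "a * (a * v1\<^sup>2 + 2 * m * v1 * v2 + d * v2\<^sup>2) = (a * v1 + m * v2)\<^sup>2 + (a * d - m\<^sup>2) * v2\<^sup>2"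
    by (simp add: power2_eq_square algebra_simps)
  have "(a * v1 + m * v2)\<^sup>2 + (a * d - m\<^sup>2) * v2\<^sup>2 > 0"
  proof (cases "v2 = 0")
    case True
    then have "v1 \<noteq> 0" using v by simp
    then show ?thesis using True a by simp
  next
    case False
    then have "(a * d - m\<^sup>2) * v2\<^sup>2 > 0" using det by simp
    then show ?thesis by (smt (verit) zero_le_power2)
  qed
  then have "a * (a * v1\<^sup>2 + 2 * m * v1 * v2 + d * v2\<^sup>2) > 0" using id by simp
  then show ?thesis using a by (simp add: zero_less_mult_iff)
qed
lemma cap_region:
  assumes U: "open U" and sm: "smooth2_on U f" and u0: "u0 \<in> U"
    and K: "pd True (pd True f) u0 * pd False (pd False f) u0 - (pd False (pd True f) u0)\<^sup>2 > 0"
  obtains s \<delta> \<Omega> where "s = 1 \<or> s = -1" "\<delta> > 0" "\<Omega> \<subseteq> U" "compact \<Omega>" "convex \<Omega>" "interior \<Omega> \<noteq> {}"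
    "\<And>u. u \<in> \<Omega> \<Longrightarrow> - \<delta> \<le> s * (f u - f u0 - pd True f u0 * (fst u - fst u0) - pd False f u0 * (snd u - snd u0))"
    "\<And>u. u \<in> \<Omega> \<Longrightarrow> u \<in> interior \<Omega> \<longleftrightarrow> - \<delta> < s * (f u - f u0 - pd True f u0 * (fst u - fst u0) - pd False f u0 * (snd u - snd u0))"
proof -
  define A where "A = pd True (pd True f)"
  define B where "B = pd False (pd True f)"
  define C where "C = pd True (pd False f)"
  define D where "D = pd False (pd False f)"
  define p where "p = pd True f u0"
  define q where "q = pd False f u0"
  define s where "s = (if A u0 < 0 then 1 else - 1 :: real)"
  have s: "s = 1 \<or> s = -1" by (simp add: s_def)
  have ss: "s * s = 1" using s by auto
  have BC0: "B u0 = C u0" unfolding B_def C_def by (rule schwarz[OF U sm u0])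
  have KK: "A u0 * D u0 - (B u0)\<^sup>2 > 0" using K by (simp add: A_def B_def D_def)
  have A0: "A u0 \<noteq> 0"
  proof
    assume "A u0 = 0" then show False using KK by (simp add: power2_eq_square)
  qed
  have sA: "s * A u0 < 0" using A0 by (auto simp: s_def)
  have Cf: "C1 U f" using sm smooth_C1 by blast
  have CT: "C1 U (pd True f)" using sm smooth_C1 smooth_pd by blast
  have CF: "C1 U (pd False f)" using sm smooth_C1 smooth_pd by blast
  have cf: "continuous_on U f" using Cf by (simp add: C1_def)
  have cA: "continuous_on U A" and cB: "continuous_on U B" using CT by (simp_all add: C1_def A_def B_def)
  have cC: "continuous_on U C" and cD: "continuous_on U D" using CF by (simp_all add: C1_def C_def D_def)
  define g1 where "g1 u = s * A u" for u
  define g2 where "g2 u = A u * D u - ((B u + C u) / 2)\<^sup>2" for u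
  have g10: "g1 u0 < 0" using sA by (simp add: g1_def)
  have g20: "g2 u0 > 0" using KK BC0 by (simp add: g2_def)
  have cg1: "continuous_on U g1" unfolding g1_def by (intro continuous_intros cA)
  have cg2: "continuous_on U g2" unfolding g2_def by (intro continuous_intros cA cB cC cD) auto
  obtain d1 where d1: "d1 > 0" "\<And>u. u \<in> U \<Longrightarrow> dist u u0 < d1 \<Longrightarrow> dist (g1 u) (g1 u0) < - g1 u0"
    using cg1 u0 g10 unfolding continuous_on_iff by (metis neg_0_less_iff_less)
  obtain d2 where d2: "d2 > 0" "\<And>u. u \<in> U \<Longrightarrow> dist u u0 < d2 \<Longrightarrow> dist (g2 u) (g2 u0) < g2 u0"
    using cg2 u0 g20 unfolding continuous_on_iff by metis
  obtain rU where rU: "rU > 0" "ball u0 rU \<subseteq> U" using U u0 open_contains_ball by blast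
  define r0 where "r0 = min (min d1 d2) rU / 2"
  have r0: "r0 > 0" "r0 < d1" "r0 < d2" "r0 < rU" using d1 d2 rU by (auto simp: r0_def min_def)
  have "cball u0 r0 \<subseteq> ball u0 rU" using r0 by (simp add: cball_subset_ball_iff)
  then have cbU: "cball u0 r0 \<subseteq> U" using rU by blast
  have g12: "g1 u < 0 \<and> g2 u > 0" if "u \<in> cball u0 r0" for u
  proof -
    have "u \<in> U" "dist u u0 < d1" "dist u u0 < d2" using that cbU r0 by (auto simp: dist_commute)
    then show ?thesis using d1(2)[of u] d2(2)[of u] by (auto simp: dist_real_def)
  qed
  have Qexp: "s * Qf f x v = (s * A x) * (fst v)\<^sup>2 + 2 * (s * (B x + C x) / 2) * fst v * snd v + (s * D x) * (snd v)\<^sup>2" for x v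
    by (simp add: Qf_def Lf_def A_def B_def C_def D_def power2_eq_square algebra_simps)
  have negdef: "s * Qf f x v < 0" if x: "x \<in> cball u0 r0" and v: "v \<noteq> 0" for x v
  proof -
    have v': "fst v \<noteq> 0 \<or> snd v \<noteq> 0" using v by (cases v) (auto simp: zero_prod_def)
    have "(s * A x) * (s * D x) - (s * (B x + C x) / 2)\<^sup>2 = s * s * g2 x"
      by (simp add: g2_def power2_eq_square algebra_simps)
    then have det: "(s * A x) * (s * D x) - (s * (B x + C x) / 2)\<^sup>2 > 0" using g12[OF x] ss by simp
    show ?thesis unfolding Qexp using quad_neg[OF _ det v'] g12[OF x] by (simp add: g1_def)
  qed
  have Qf0: "Qf f x 0 = 0" for x by (simp add: Qf_def Lf_def)
  define W where "W u = s * (f u - f u0 - p * (fst u - fst u0) - q * (snd u - snd u0))" for u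
  have cW: "continuous_on U W" unfolding W_def by (intro continuous_intros cf)
  have W0: "W u0 = 0" by (simp add: W_def)
  have dW1: "((\<lambda>t. W (x + t *\<^sub>R v)) has_real_derivative s * (Lf f (x + t *\<^sub>R v) v - p * fst v - q * snd v)) (at t)"
    if "x + t *\<^sub>R v \<in> U" for x v t
  proof -
    have e: "(\<lambda>t. W (x + t *\<^sub>R v)) = (\<lambda>t. s * (f (x + t *\<^sub>R v) - f u0 - p * (fst x + t * fst v - fst u0) - q * (snd x + t * snd v - snd u0)))"
      by (simp add: W_def)
    show ?thesis unfolding e
      by (rule derivative_eq_intros line_deriv1[OF U sm that] | simp)+
  qed
  have dW2: "((\<lambda>t. s * (Lf f (x + t *\<^sub>R v) v - p * fst v - q * snd v)) has_real_derivative s * Qf f (x + t *\<^sub>R v) v) (at t)"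
    if "x + t *\<^sub>R v \<in> U" for x v t
    by (rule derivative_eq_intros line_deriv2[OF U sm that] | simp)+
  have ray: "W (u0 + t2 *\<^sub>R v) < W (u0 + t1 *\<^sub>R v)"
    if v: "v \<noteq> 0" and t: "0 \<le> t1" "t1 < t2" and in2: "u0 + t2 *\<^sub>R v \<in> cball u0 r0" for v t1 t2
  proof -
    have inC: "u0 + t *\<^sub>R v \<in> cball u0 r0" if "0 \<le> t" "t \<le> t2" for t
    proof -
      have "norm (t *\<^sub>R v) \<le> norm (t2 *\<^sub>R v)" using that by (simp add: mult_right_mono)
      then show ?thesis using in2 by (simp add: dist_norm)
    qed
    show ?thesis
    proof (rule strict_dec[where H'' = "\<lambda>t. s * Qf f (u0 + t *\<^sub>R v) v", OF _ _ _ _ t order_refl])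
      fix t assume "0 \<le> t" "t \<le> t2"
      then have inU: "u0 + t *\<^sub>R v \<in> U" using inC cbU by blast
      show "((\<lambda>t. W (u0 + t *\<^sub>R v)) has_real_derivative s * (Lf f (u0 + t *\<^sub>R v) v - p * fst v - q * snd v)) (at t)"
        by (rule dW1[OF inU])
      show "((\<lambda>t. s * (Lf f (u0 + t *\<^sub>R v) v - p * fst v - q * snd v)) has_real_derivative s * Qf f (u0 + t *\<^sub>R v) v) (at t)"
        by (rule dW2[OF inU])
      show "s * Qf f (u0 + t *\<^sub>R v) v < 0" using negdef[OF inC v] \<open>0 \<le> t\<close> \<open>t \<le> t2\<close> by blast
    next
      show "s * (Lf f (u0 + 0 *\<^sub>R v) v - p * fst v - q * snd v) = 0"
        by (simp add: Lf_def p_def q_def)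
    qed
  qed
  have conc: "min (W x) (W y) \<le> W (x + t *\<^sub>R (y - x))"
    if x: "x \<in> cball u0 r0" and y: "y \<in> cball u0 r0" and t: "0 \<le> t" "t \<le> 1" for x y t
  proof -
    have inC: "x + t *\<^sub>R (y - x) \<in> cball u0 r0" if "0 \<le> t" "t \<le> 1" for t
    proof -
      have "(1 - t) *\<^sub>R x + t *\<^sub>R y \<in> cball u0 r0"
        using convex_cball[of u0 r0, unfolded convex_alt] x y that by blast
      moreover have "(1 - t) *\<^sub>R x + t *\<^sub>R y = x + t *\<^sub>R (y - x)" by (simp add: algebra_simps)
      ultimately show ?thesis by simp
    qed
    have "min (W (x + 0 *\<^sub>R (y - x))) (W (x + 1 *\<^sub>R (y - x))) \<le> W (x + t *\<^sub>R (y - x))"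
    proof (rule concave_min[where H'' = "\<lambda>t. s * Qf f (x + t *\<^sub>R (y - x)) (y - x)", OF _ _ _ t])
      fix t :: real assume "0 \<le> t" "t \<le> 1"
      then have inU: "x + t *\<^sub>R (y - x) \<in> U" using inC cbU by blast
      show "((\<lambda>t. W (x + t *\<^sub>R (y - x))) has_real_derivative s * (Lf f (x + t *\<^sub>R (y - x)) (y - x) - p * fst (y - x) - q * snd (y - x))) (at t)"
        by (rule dW1[OF inU])
      show "((\<lambda>t. s * (Lf f (x + t *\<^sub>R (y - x)) (y - x) - p * fst (y - x) - q * snd (y - x))) has_real_derivative s * Qf f (x + t *\<^sub>R (y - x)) (y - x)) (at t)"
        by (rule dW2[OF inU])
      show "s * Qf f (x + t *\<^sub>R (y - x)) (y - x) \<le> 0"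
      proof (cases "y - x = 0")
        case True then show ?thesis by (simp add: Qf0)
      next
        case False then show ?thesis using negdef[OF inC False] \<open>0 \<le> t\<close> \<open>t \<le> 1\<close> by (simp add: less_imp_le)
      qed
    qed
    then show ?thesis by simp
  qed
  have sph_ne: "u0 + (r0, 0) \<in> sphere u0 r0" using r0 by (simp add: dist_norm)
  obtain z0 where z0: "z0 \<in> sphere u0 r0" "\<And>z. z \<in> sphere u0 r0 \<Longrightarrow> W z \<le> W z0"
    using continuous_attains_sup[of "sphere u0 r0" W] sph_ne cW cbU sphere_cball
      continuous_on_subset by (metis compact_sphere empty_iff subset_trans)
  have "W z0 < 0"
  proof -
    have "z0 - u0 \<noteq> 0" using z0(1) r0 by auto
    moreover have "u0 + 1 *\<^sub>R (z0 - u0) \<in> cball u0 r0" using z0(1) by auto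
    ultimately have "W (u0 + 1 *\<^sub>R (z0 - u0)) < W (u0 + 0 *\<^sub>R (z0 - u0))"
      using ray[of "z0 - u0" 0 1] by simp
    then show ?thesis using W0 by simp
  qed
  define \<delta> where "\<delta> = - W z0 / 2"
  have \<delta>: "\<delta> > 0" using \<open>W z0 < 0\<close> by (simp add: \<delta>_def)
  have sphW: "W z < - \<delta>" if "z \<in> sphere u0 r0" for z
    using z0(2)[OF that] \<open>W z0 < 0\<close> by (simp add: \<delta>_def)
  define \<Omega> where "\<Omega> = cball u0 r0 \<inter> W -` {- \<delta>..}"
  have \<Omega>U: "\<Omega> \<subseteq> U" using cbU by (auto simp: \<Omega>_def)
  have cWc: "continuous_on (cball u0 r0) W" using cW cbU continuous_on_subset by blast
  have "closed \<Omega>" unfolding \<Omega>_def by (rule continuous_closed_preimage[OF cWc closed_cball closed_atLeast])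
  then have comp: "compact \<Omega>" by (simp add: \<Omega>_def compact_eq_bounded_closed bounded_Int)
  have conv: "convex \<Omega>"
  proof (rule convexI)
    fix x y :: "real \<times> real" and a b :: real
    assume xy: "x \<in> \<Omega>" "y \<in> \<Omega>" and ab: "0 \<le> a" "0 \<le> b" "a + b = 1"
    have e: "a *\<^sub>R x + b *\<^sub>R y = x + b *\<^sub>R (y - x)"
      using ab by (simp add: algebra_simps) (metis add_diff_cancel_right' scaleR_collapse)
    have b1: "b \<le> 1" using ab by simp
    have xc: "x \<in> cball u0 r0" and yc: "y \<in> cball u0 r0" using xy by (auto simp: \<Omega>_def)
    have "min (W x) (W y) \<le> W (x + b *\<^sub>R (y - x))" by (rule conc[OF xc yc ab(2) b1])
    moreover have "- \<delta> \<le> W x" "- \<delta> \<le> W y" using xy by (auto simp: \<Omega>_def)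
    moreover have "x + b *\<^sub>R (y - x) \<in> cball u0 r0"
    proof -
      have "(1 - b) *\<^sub>R x + b *\<^sub>R y \<in> cball u0 r0"
        using convex_cball[of u0 r0, unfolded convex_alt] xc yc ab b1 by blast
      moreover have "(1 - b) *\<^sub>R x + b *\<^sub>R y = x + b *\<^sub>R (y - x)" by (simp add: algebra_simps)
      ultimately show ?thesis by simp
    qed
    ultimately show "a *\<^sub>R x + b *\<^sub>R y \<in> \<Omega>" unfolding e by (auto simp: \<Omega>_def)
  qed
  define Ob where "Ob = ball u0 r0 \<inter> W -` {- \<delta> <..}"
  have cWb: "continuous_on (ball u0 r0) W" using cWc ball_subset_cball continuous_on_subset by blast
  have oOb: "open Ob" unfolding Ob_def by (rule continuous_open_preimage[OF cWb open_ball open_greaterThan])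
  have ObO: "Ob \<subseteq> \<Omega>" by (auto simp: Ob_def \<Omega>_def)
  have ObI: "Ob \<subseteq> interior \<Omega>" by (rule interior_maximal[OF ObO oOb])
  have u0Ob: "u0 \<in> Ob" using r0 \<delta> W0 by (simp add: Ob_def)
  have intne: "interior \<Omega> \<noteq> {}" using ObI u0Ob by blast
  have intchar: "u \<in> interior \<Omega> \<longleftrightarrow> - \<delta> < W u" if u: "u \<in> \<Omega>" for u
  proof
    assume "- \<delta> < W u"
    moreover have "u \<notin> sphere u0 r0" using sphW calculation by fastforce
    ultimately have "u \<in> Ob" using u by (auto simp: Ob_def \<Omega>_def)
    then show "u \<in> interior \<Omega>" using ObI by blast
  next
    assume ui: "u \<in> interior \<Omega>"
    show "- \<delta> < W u"
    proof (cases "u = u0")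
      case True then show ?thesis using W0 \<delta> by simp
    next
      case False
      obtain e where e: "e > 0" "ball u e \<subseteq> \<Omega>" using ui mem_interior by blast
      define v where "v = u - u0"
      have v0: "v \<noteq> 0" using False by (simp add: v_def)
      then have nv: "norm v > 0" by simp
      define t2 where "t2 = 1 + e / (2 * norm v)"
      have t2: "1 < t2" using e nv by (simp add: t2_def)
      have "u0 + t2 *\<^sub>R v - u = (t2 - 1) *\<^sub>R v" by (simp add: v_def algebra_simps)
      then have "dist u (u0 + t2 *\<^sub>R v) = norm ((t2 - 1) *\<^sub>R v)"
        by (metis dist_commute dist_norm)
      also have "\<dots> = e / 2" using nv e t2 by (simp add: t2_def)
      finally have "u0 + t2 *\<^sub>R v \<in> ball u e" using e by simp
      then have u'\<Omega>: "u0 + t2 *\<^sub>R v \<in> \<Omega>" using e by blast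
      then have "W (u0 + t2 *\<^sub>R v) < W (u0 + 1 *\<^sub>R v)"
        using ray[OF v0 _ t2] by (simp add: \<Omega>_def)
      moreover have "u0 + 1 *\<^sub>R v = u" by (simp add: v_def)
      moreover have "- \<delta> \<le> W (u0 + t2 *\<^sub>R v)" using u'\<Omega> by (simp add: \<Omega>_def)
      ultimately show ?thesis by simp
    qed
  qed
  show ?thesis
  proof (rule that[OF s \<delta> \<Omega>U comp conv intne])
    fix u assume "u \<in> \<Omega>"
    then show "- \<delta> \<le> s * (f u - f u0 - pd True f u0 * (fst u - fst u0) - pd False f u0 * (snd u - snd u0))"
      by (simp add: \<Omega>_def W_def p_def q_def)
    show "u \<in> interior \<Omega> \<longleftrightarrow> - \<delta> < s * (f u - f u0 - pd True f u0 * (fst u - fst u0) - pd False f u0 * (snd u - snd u0))"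
      using intchar[OF \<open>u \<in> \<Omega>\<close>] by (simp add: W_def p_def q_def)
  qed
qed
lemma mk3_nth[simp]: "mk3 x y z $ 1 = x" "mk3 x y z $ 2 = y" "mk3 x y z $ 3 = z"
  by (simp_all add: mk3_def)

lemma mk3_inner: "mk3 a b c \<bullet> mk3 x y z = a * x + b * y + c * z"
  by (simp add: inner_vec_def sum_3)

lemma mk3_norm2: "(norm (mk3 x y z))\<^sup>2 = x\<^sup>2 + y\<^sup>2 + z\<^sup>2"
  unfolding power2_norm_eq_inner mk3_inner by (simp add: power2_eq_square)

lemma emb_cont:
  assumes g: "orthogonal_transformation g" and cf: "continuous_on U f"
  shows "continuous_on U (graph_emb g f)"
proof -
  have "bounded_linear g"
    using orthogonal_transformation_linear[OF g] linear_conv_bounded_linear by blast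
  then have cg: "continuous_on UNIV g" by (rule linear_continuous_on)
  have cm: "continuous_on U (\<lambda>u. mk3 (fst u) (snd u) (f u))"
    unfolding mk3_def
  proof (intro continuous_on_vec_lambda allI)
    fix i :: 3
    show "continuous_on U (\<lambda>u. if i = 1 then fst u else if i = 2 then snd u else f u)"
      by (cases "i = 1"; cases "i = 2") (auto intro!: continuous_intros cf)
  qed
  show ?thesis unfolding graph_emb_def
    using continuous_on_compose2[OF cg cm] by simp
qed

definition proj2 :: "(real^3 \<Rightarrow> real^3) \<Rightarrow> real^3 \<Rightarrow> real \<times> real" where
  "proj2 g x = (inv g x $ 1, inv g x $ 2)"

lemma proj2_emb:
  assumes g: "orthogonal_transformation g"
  shows "proj2 g (graph_emb g f u) = u"
  using orthogonal_transformation_inj[OF g]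
  by (simp add: proj2_def graph_emb_def)

lemma proj2_cont:
  assumes g: "orthogonal_transformation g"
  shows "continuous_on S (proj2 g)"
proof -
  have bl: "bounded_linear (inv g)"
    using orthogonal_transformation_linear[OF orthogonal_transformation_inv[OF g]] linear_conv_bounded_linear by blast
  have "bounded_linear (\<lambda>x. inv g x $ i)" for i
    by (rule bounded_linear_compose[OF bounded_linear_vec_nth bl])
  then have "continuous_on S (\<lambda>x. inv g x $ i)" for i
    by (simp add: linear_continuous_on)
  then show ?thesis unfolding proj2_def by (intro continuous_on_Pair)
qed

lemma emb_inj:
  assumes g: "orthogonal_transformation g"
  shows "inj_on (graph_emb g f) A"
  by (metis assms inj_onI proj2_emb)

lemma emb_inner:
  assumes g: "orthogonal_transformation g"
  shows "g b \<bullet> graph_emb g f u = b \<bullet> mk3 (fst u) (snd u) (f u)"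
  using g unfolding graph_emb_def orthogonal_transformation_def by simp

lemma emb_norm2:
  assumes g: "orthogonal_transformation g"
  shows "(norm (graph_emb g f u))\<^sup>2 = (fst u)\<^sup>2 + (snd u)\<^sup>2 + (f u)\<^sup>2"
  using g unfolding graph_emb_def by (simp add: orthogonal_transformation_norm mk3_norm2)
lemma gauss_pos_iff:
  "gauss_curv f u > 0 \<longleftrightarrow>
   pd True (pd True f) u * pd False (pd False f) u - (pd False (pd True f) u)\<^sup>2 > 0"
proof -
  have "(1 + (pd True f u)\<^sup>2 + (pd False f u)\<^sup>2) > 0" by (simp add: add_pos_nonneg)
  then have d: "(1 + (pd True f u)\<^sup>2 + (pd False f u)\<^sup>2)\<^sup>2 > 0" by simp
  show ?thesis unfolding gauss_curv_def using d by (simp add: zero_less_divide_iff)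
qed

lemma vec3_inner_mk3: "b \<bullet> mk3 x y z = b $ 1 * x + b $ 2 * y + b $ 3 * z"
  by (simp add: inner_vec_def sum_3)

theorem mainTheorem15:
  fixes S :: "(real^3) set"
  assumes "smooth_surface S"
  shows "saddle S \<longleftrightarrow> \<not> (\<exists>D. is_cap S D)"
proof
  assume sad: "saddle S"
  show "\<not> (\<exists>D. is_cap S D)"
  proof
    assume "\<exists>D. is_cap S D"
    then obtain D h k a c where DS: "D \<subseteq> S" and hom: "homeomorphism (cball (0::real\<times>real) 1) D h k"
      and bd: "h ` sphere 0 1 \<subseteq> {x. a \<bullet> x = c}" and inn: "D - h ` sphere 0 1 \<subseteq> {x. a \<bullet> x > c}"
      unfolding is_cap_def by blast
    have hD: "h ` cball 0 1 = D" and ch: "continuous_on (cball 0 1) h"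
      and kh: "\<And>z. z \<in> cball 0 1 \<Longrightarrow> k (h z) = z"
      using hom by (auto simp: homeomorphism_def)
    have compD: "compact D" using compact_continuous_image[OF ch compact_cball] hD by simp
    have h0D: "h 0 \<in> D" using hD by force
    have h0nb: "h 0 \<notin> h ` sphere 0 1"
    proof
      assume "h 0 \<in> h ` sphere 0 1"
      then obtain z where z: "z \<in> sphere 0 1" "h 0 = h z" by blast
      then have "k (h 0) = k (h z)" by simp
      then have "0 = z" using kh[of 0] kh[of z] z(1) by simp
      then show False using z(1) by simp
    qed
    define \<delta> where "\<delta> = a \<bullet> h 0 - c"
    have \<delta>: "\<delta> > 0" using inn h0D h0nb by (auto simp: \<delta>_def)
    obtain R where R: "R > 0" "\<And>x. x \<in> D \<Longrightarrow> norm x \<le> R"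
      using compact_imp_bounded[OF compD] bounded_pos by blast
    define \<epsilon> where "\<epsilon> = \<delta> / (2 * (R\<^sup>2 + 1))"
    have R1: "R\<^sup>2 + 1 > 0" by (simp add: add_nonneg_pos)
    have \<epsilon>: "\<epsilon> > 0" unfolding \<epsilon>_def using \<delta> R1 by (intro divide_pos_pos) auto
    have \<epsilon>R: "\<epsilon> * R\<^sup>2 < \<delta>"
    proof -
      have "\<epsilon> * R\<^sup>2 \<le> \<epsilon> * (R\<^sup>2 + 1)" using \<epsilon> by simp
      also have "\<dots> = \<delta> / 2" unfolding \<epsilon>_def using R1 by (simp add: field_simps)
      finally show ?thesis using \<delta> by simp
    qed
    define \<phi> where "\<phi> x = a \<bullet> x + \<epsilon> * (norm x)\<^sup>2" for x
    have c\<phi>: "continuous_on D \<phi>" unfolding \<phi>_def by (intro continuous_intros)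
    obtain pm where pm: "pm \<in> D" "\<And>x. x \<in> D \<Longrightarrow> \<phi> x \<le> \<phi> pm"
      using continuous_attains_sup[OF compD _ c\<phi>] h0D by blast
    have pm_nb: "pm \<notin> h ` sphere 0 1"
    proof
      assume pmb: "pm \<in> h ` sphere 0 1"
      then have "a \<bullet> pm = c" using bd by blast
      moreover have "(norm pm)\<^sup>2 \<le> R\<^sup>2" using R(2)[OF pm(1)] by (simp add: power_mono)
      ultimately have "\<phi> pm \<le> c + \<epsilon> * R\<^sup>2" using \<epsilon> by (simp add: \<phi>_def)
      also have "\<dots> < c + \<delta>" using \<epsilon>R by simp
      also have "\<dots> \<le> \<phi> (h 0)" by (simp add: \<phi>_def \<delta>_def \<epsilon> less_imp_le)
      finally show False using pm(2)[OF h0D] by simp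
    qed
    obtain z0 where z0: "z0 \<in> ball 0 1" "h z0 = pm"
    proof -
      obtain z where z: "z \<in> cball 0 1" "h z = pm" using pm(1) hD by blast
      then have "z \<notin> sphere 0 1" using pm_nb by blast
      then have "z \<in> ball 0 1" using z(1) by (auto simp: dist_norm)
      then show ?thesis using that z by blast
    qed
    have pmS: "pm \<in> S" using pm DS by blast
    obtain g U f V where lg: "local_graph S g U f V" and pmV: "pm \<in> V"
      using assms pmS unfolding smooth_surface_def by blast
    have g: "orthogonal_transformation g" and U: "open U" and sm: "smooth2_on U f"
      and V: "open V" and SV: "S \<inter> V = graph_emb g f ` U"
      using lg by (auto simp: local_graph_def)
    have "pm \<in> graph_emb g f ` U" using SV pmS pmV by (metis IntI)
    then obtain u0 where u0: "u0 \<in> U" "graph_emb g f u0 = pm" by (metis imageE)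
    have "local_graph S g U f V \<and> u0 \<in> U \<and> graph_emb g f u0 \<in> V" using lg u0 pmV by simp
    then have Kle: "gauss_curv f u0 \<le> 0" using sad[unfolded saddle_def, rule_format, of g U f V u0] by simp
    define W where "W = ball 0 1 \<inter> h -` V"
    have chb: "continuous_on (ball 0 1) h" using ch ball_subset_cball continuous_on_subset by blast
    have oW: "open W" unfolding W_def by (rule continuous_open_preimage[OF chb open_ball V])
    define \<Theta> where "\<Theta> = proj2 g \<circ> h"
    have hW: "h z = graph_emb g f (\<Theta> z) \<and> \<Theta> z \<in> U" if "z \<in> W" for z
    proof -
      have "h z \<in> D" using that hD by (auto simp: W_def)
      then have "h z \<in> S \<inter> V" using DS that by (auto simp: W_def)
      then obtain u where u: "u \<in> U" "h z = graph_emb g f u" using SV by blast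
      then have "\<Theta> z = u" by (simp add: \<Theta>_def proj2_emb[OF g])
      then show ?thesis using u by simp
    qed
    have c\<Theta>: "continuous_on W \<Theta>" unfolding \<Theta>_def
      by (rule continuous_on_compose[OF continuous_on_subset[OF chb] proj2_cont[OF g]]) (auto simp: W_def)
    have i\<Theta>: "inj_on \<Theta> W"
    proof (rule inj_onI)
      fix z z' assume zz: "z \<in> W" "z' \<in> W" "\<Theta> z = \<Theta> z'"
      then have "h z = h z'" using hW[OF zz(1)] hW[OF zz(2)] by simp
      then have "k (h z) = k (h z')" by simp
      then show "z = z'" using kh zz(1,2) by (auto simp: W_def)
    qed
    have o\<Theta>: "open (\<Theta> ` W)" by (rule invariance_of_domain[OF c\<Theta> oW i\<Theta>])
    have z0W: "z0 \<in> W" using z0 pmV by (simp add: W_def)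
    have "\<Theta> z0 = u0" using z0(2) u0(2) proj2_emb[OF g, of f u0] by (simp add: \<Theta>_def)
    then have u0T: "u0 \<in> \<Theta> ` W \<inter> U" using z0W u0 by blast
    obtain r where r: "r > 0" "ball u0 r \<subseteq> \<Theta> ` W \<inter> U"
      using open_contains_ball[of "\<Theta> ` W \<inter> U"] o\<Theta> U u0T by (meson open_Int)
    define b where "b = inv g a"
    have ab: "a = g b" unfolding b_def using orthogonal_transformation_surj[OF g] by (simp add: surj_f_inv_f)
    have \<phi>emb: "\<phi> (graph_emb g f u) = b $ 1 * fst u + b $ 2 * snd u + b $ 3 * f u
        + \<epsilon> * ((fst u)\<^sup>2 + (snd u)\<^sup>2 + (f u)\<^sup>2)" for u
      unfolding \<phi>_def ab emb_inner[OF g] emb_norm2[OF g] vec3_inner_mk3 by simp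
    have mx: "\<phi> (graph_emb g f u) \<le> \<phi> (graph_emb g f u0)" if uin: "u \<in> ball u0 r" for u
    proof -
      have "u \<in> \<Theta> ` W" using r(2) uin by blast
      then obtain z where z: "z \<in> W" "u = \<Theta> z" by blast
      then have "graph_emb g f u = h z" using hW[OF z(1)] by simp
      moreover have "h z \<in> D" using z(1) hD by (auto simp: W_def)
      ultimately show ?thesis using pm(2) u0 by simp
    qed
    have "pd True (pd True f) u0 * pd False (pd False f) u0 - (pd False (pd True f) u0)\<^sup>2 > 0"
      by (rule no_interior_max[OF U sm u0(1) \<epsilon> r(1), of "b $ 1" "b $ 2" "b $ 3"])
         (use r(2) mx \<phi>emb in auto)
    then have "gauss_curv f u0 > 0" by (simp add: gauss_pos_iff)
    then show False using Kle by simp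
  qed
next
  assume nc: "\<not> (\<exists>D. is_cap S D)"
  show "saddle S"
    unfolding saddle_def
  proof (intro allI impI)
    fix g U f V u0
    assume H: "local_graph S g U f V \<and> u0 \<in> U \<and> graph_emb g f u0 \<in> V"
    show "gauss_curv f u0 \<le> 0"
    proof (rule ccontr)
      assume "\<not> gauss_curv f u0 \<le> 0"
      then have "gauss_curv f u0 > 0" by simp
      then have K: "pd True (pd True f) u0 * pd False (pd False f) u0 - (pd False (pd True f) u0)\<^sup>2 > 0"
        using gauss_pos_iff by blast
      have g: "orthogonal_transformation g" and U: "open U" and sm: "smooth2_on U f"
        and SV: "S \<inter> V = graph_emb g f ` U" and u0: "u0 \<in> U"
        using H by (auto simp: local_graph_def)
      have cf: "continuous_on U f" using sm unfolding smooth2_on_def by (metis ipd.simps(1))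
      define p where "p = pd True f u0"
      define q where "q = pd False f u0"
      obtain s \<delta> \<Omega> where s: "s = 1 \<or> s = -1" and \<delta>: "\<delta> > 0" and \<Omega>U: "\<Omega> \<subseteq> U"
        and comp: "compact \<Omega>" and conv: "convex \<Omega>" and intne: "interior \<Omega> \<noteq> {}"
        and lo: "\<And>u. u \<in> \<Omega> \<Longrightarrow> - \<delta> \<le> s * (f u - f u0 - p * (fst u - fst u0) - q * (snd u - snd u0))"
        and ic: "\<And>u. u \<in> \<Omega> \<Longrightarrow> u \<in> interior \<Omega> \<longleftrightarrow> - \<delta> < s * (f u - f u0 - p * (fst u - fst u0) - q * (snd u - snd u0))"
        using cap_region[OF U sm u0 K] unfolding p_def q_def by blast
      have "\<Omega> homeomorphic cball (0::real \<times> real) 1"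
        by (rule homeomorphic_convex_compact_cball[OF conv comp intne]) simp
      then obtain k0 h0 where "homeomorphism \<Omega> (cball (0::real\<times>real) 1) k0 h0"
        unfolding homeomorphic_def by blast
      then have hk0: "homeomorphism (cball (0::real\<times>real) 1) \<Omega> h0 k0" by (rule homeomorphism_symD)
      have h0\<Omega>: "h0 ` cball 0 1 = \<Omega>" and k0\<Omega>: "k0 ` \<Omega> = cball 0 1"
        and ch0: "continuous_on (cball 0 1) h0" and ck0: "continuous_on \<Omega> k0"
        and k0h0: "\<And>z. z \<in> cball 0 1 \<Longrightarrow> k0 (h0 z) = z"
        and h0k0: "\<And>y. y \<in> \<Omega> \<Longrightarrow> h0 (k0 y) = y"
        using hk0 by (auto simp: homeomorphism_def)
      have ih0: "inj_on h0 (cball 0 1)" by (metis inj_onI k0h0)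
      have ik0: "inj_on k0 \<Omega>" by (metis inj_onI h0k0)
      have int1: "h0 z \<in> interior \<Omega>" if "z \<in> ball 0 1" for z
        using continuous_image_subset_interior[OF ch0 ih0] that h0\<Omega> by auto
      have int2: "k0 y \<in> ball 0 1" if "y \<in> interior \<Omega>" for y
        using continuous_image_subset_interior[OF ck0 ik0] that k0\<Omega> by auto
      let ?e = "graph_emb g f"
      have ce: "continuous_on \<Omega> ?e" using emb_cont[OF g continuous_on_subset[OF cf \<Omega>U]] .
      obtain k1 where hk1: "homeomorphism \<Omega> (?e ` \<Omega>) ?e k1"
        using homeomorphism_compact[OF comp ce refl emb_inj[OF g]] by blast
      define D where "D = ?e ` \<Omega>"
      have homD: "homeomorphism (cball 0 1) D (?e \<circ> h0) (k0 \<circ> k1)"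
        unfolding D_def by (rule homeomorphism_compose[OF hk0 hk1])
      have DS: "D \<subseteq> S" using \<Omega>U SV by (auto simp: D_def)
      define a where "a = g (mk3 (- s * p) (- s * q) s)"
      define c where "c = s * (f u0 - p * fst u0 - q * snd u0) - \<delta>"
      have aemb: "a \<bullet> ?e u - c = s * (f u - f u0 - p * (fst u - fst u0) - q * (snd u - snd u0)) + \<delta>" for u
        unfolding a_def c_def emb_inner[OF g] mk3_inner by (simp add: algebra_simps)
      have a0: "a \<noteq> 0"
      proof
        assume "a = 0"
        then have "norm (mk3 (- s * p) (- s * q) s) = 0"
          unfolding a_def using orthogonal_transformation_norm[OF g, of "mk3 (- s * p) (- s * q) s"] by simp
        then have "mk3 (- s * p) (- s * q) s $ 3 = 0" by simp
        then show False using s by auto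
      qed
      have sph: "(?e \<circ> h0) ` sphere 0 1 \<subseteq> {x. a \<bullet> x = c}"
      proof clarify
        fix z :: "real \<times> real" assume z: "z \<in> sphere 0 1"
        then have zc: "z \<in> cball 0 1" by auto
        have "h0 z \<in> \<Omega>" using zc h0\<Omega> by blast
        moreover have "h0 z \<notin> interior \<Omega>"
        proof
          assume "h0 z \<in> interior \<Omega>"
          then have "k0 (h0 z) \<in> ball 0 1" by (rule int2)
          then show False using k0h0[OF zc] z by simp
        qed
        ultimately have "s * (f (h0 z) - f u0 - p * (fst (h0 z) - fst u0) - q * (snd (h0 z) - snd u0)) = - \<delta>"
          using lo[of "h0 z"] ic[of "h0 z"] by linarith
        then show "a \<bullet> (?e \<circ> h0) z = c" using aemb[of "h0 z"] by simp
      qed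
      have inn: "D - (?e \<circ> h0) ` sphere 0 1 \<subseteq> {x. a \<bullet> x > c}"
      proof clarify
        fix x assume x: "x \<in> D" "x \<notin> (?e \<circ> h0) ` sphere 0 1"
        then obtain y where y: "y \<in> \<Omega>" "x = ?e y" by (auto simp: D_def)
        have kc: "k0 y \<in> cball 0 1" using y k0\<Omega> by blast
        have "k0 y \<notin> sphere 0 1"
        proof
          assume "k0 y \<in> sphere 0 1"
          then have "?e (h0 (k0 y)) \<in> (?e \<circ> h0) ` sphere 0 1" by auto
          then show False using x y h0k0 by simp
        qed
        then have "k0 y \<in> ball 0 1" using kc by (auto simp: dist_norm)
        then have "h0 (k0 y) \<in> interior \<Omega>" by (rule int1)
        then have "y \<in> interior \<Omega>" using h0k0[OF y(1)] by simp
        then have "- \<delta> < s * (f y - f u0 - p * (fst y - fst u0) - q * (snd y - snd u0))" using ic y by blast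
        then show "a \<bullet> x > c" using aemb[of y] y by simp
      qed
      have "\<exists>h k a c. homeomorphism (cball (0::real \<times> real) 1) D h k \<and> a \<noteq> 0 \<and>
        h ` sphere 0 1 \<subseteq> {x. a \<bullet> x = c} \<and> D - h ` sphere 0 1 \<subseteq> {x. a \<bullet> x > c}"
        by (rule exI[of _ "?e \<circ> h0"], rule exI[of _ "k0 \<circ> k1"], rule exI[of _ a], rule exI[of _ c])
           (intro conjI homD a0 sph inn)
      then have "is_cap S D" unfolding is_cap_def using DS by blast
      then show False using nc by blast
    qed
  qed
qed

end
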